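(* Let $M=\{0,1\}$ be the commutative monoid under multiplication. Then the simplicial set $K(M,2)$ is not a Skvortsov–Shehtman complex; specifically, it fails the Beck–Chevalley condition $\mathrm{BC}_{0,3}[5]$.
   Context: For a commutative monoid $M$ (written multiplicatively), $K(M,2)$ is the simplicial set whose $n$-simplices are families $(a_{ijk})_{0\le i<j<k\le n}$ of elements of $M$ satisfying $a_{ikl}a_{ijk}=a_{ijl}a_{jkl}$ for all $0\le i<j<k<l\le n$; the $j$-th face map omits all entries involving the index $j$ (and reindexes), and the $j$-th degeneracy map repeats the index $j$, inserting the unit of $M$ at the new entries. The Beck–Chevalley condition $\mathrm{BC}_{p,q}[n]$ ($n>1$, $0\le p<q\le n$) on a simplicial set $S$: for any $(n-1)$-simplices $c_p,c_q$ of $S$ with $d_pc_q=d_{q-1}c_p$ there exists an $n$-simplex $x$ of $S$ with $d_px=c_p$ and $d_qx=c_q$. $S$ is a Skvortsov–Shehtman complex if it satisfies all $\mathrm{BC}_{p,q}[n]$. *)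

theory Defs
  imports Main
begin

text \<open>An n-simplex of K(M,2) is represented as a function a :: nat => nat => nat => 'a,
  where a i j k is the entry a_{ijk} for 0 <= i < j < k <= n; all other entries are
  normalised to the unit (so that simplices are determined by their genuine entries).\<close>

definition K2 :: "'a set \<Rightarrow> ('a \<Rightarrow> 'a \<Rightarrow> 'a) \<Rightarrow> 'a \<Rightarrow> nat \<Rightarrow> (nat \<Rightarrow> nat \<Rightarrow> nat \<Rightarrow> 'a) set" where
  "K2 M mult e n = {a.
     (\<forall>i j k. i < j \<and> j < k \<and> k \<le> n \<longrightarrow> a i j k \<in> M) \<and>
     (\<forall>i j k. \<not> (i < j \<and> j < k \<and> k \<le> n) \<longrightarrow> a i j k = e) \<and>
     (\<forall>i j k l. i < j \<and> j < k \<and> k < l \<and> l \<le> n \<longrightarrow>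
         mult (a i k l) (a i j k) = mult (a i j l) (a j k l))}"

definition skip :: "nat \<Rightarrow> nat \<Rightarrow> nat" where
  "skip p m = (if m < p then m else Suc m)"

definition K2_face :: "'a \<Rightarrow> nat \<Rightarrow> nat \<Rightarrow> (nat \<Rightarrow> nat \<Rightarrow> nat \<Rightarrow> 'a) \<Rightarrow> (nat \<Rightarrow> nat \<Rightarrow> nat \<Rightarrow> 'a)" where
  "K2_face e n p a = (\<lambda>i j k. if i < j \<and> j < k \<and> k \<le> n - 1
        then a (skip p i) (skip p j) (skip p k) else e)"

text \<open>Beck--Chevalley condition BC_{p,q}[n] for a simplicial set given by its sets of
  simplices X n and face maps d n j : X n -> X (n-1).\<close>
definition BC :: "(nat \<Rightarrow> 's set) \<Rightarrow> (nat \<Rightarrow> nat \<Rightarrow> 's \<Rightarrow> 's) \<Rightarrow> nat \<Rightarrow> nat \<Rightarrow> nat \<Rightarrow> bool" where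
  "BC X d p q n = (\<forall>cp \<in> X (n - 1). \<forall>cq \<in> X (n - 1).
      d (n - 1) p cq = d (n - 1) (q - 1) cp \<longrightarrow>
      (\<exists>x \<in> X n. d n p x = cp \<and> d n q x = cq))"

definition SS_complex :: "(nat \<Rightarrow> 's set) \<Rightarrow> (nat \<Rightarrow> nat \<Rightarrow> 's \<Rightarrow> 's) \<Rightarrow> bool" where
  "SS_complex X d = (\<forall>n p q. 1 < n \<and> p < q \<and> q \<le> n \<longrightarrow> BC X d p q n)"

end

theory Submission
  imports Defs
begin

lemma le4: "(l::nat) \<le> 4 \<Longrightarrow> l = 0 \<or> l = 1 \<or> l = 2 \<or> l = 3 \<or> l = 4" by auto
lemma le5: "(l::nat) \<le> 5 \<Longrightarrow> l = 0 \<or> l = 1 \<or> l = 2 \<or> l = 3 \<or> l = 4 \<or> l = 5" by auto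

definition cp :: "nat \<Rightarrow> nat \<Rightarrow> nat \<Rightarrow> nat" where
  "cp i j k = (if (i,j,k) \<in> {(0,1,2),(0,1,3),(0,1,4),(0,2,3),(0,3,4),(1,3,4),(2,3,4)} then 0 else 1)"
definition cq :: "nat \<Rightarrow> nat \<Rightarrow> nat \<Rightarrow> nat" where
  "cq i j k = (if (i,j,k) \<in> {(0,1,2),(0,3,4),(1,2,3),(1,2,4),(1,3,4),(2,3,4)} then 0 else 1)"

lemma cp_in: "cp \<in> K2 {0::nat, 1} (*) 1 4"
  unfolding K2_def
proof (intro CollectI conjI allI impI)
  fix i j k assume "\<not> (i < j \<and> j < k \<and> k \<le> (4::nat))"
  then show "cp i j k = 1" by (auto simp: cp_def)
next
  fix i j k l assume a: "i < j \<and> j < k \<and> k < l \<and> l \<le> (4::nat)"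
  then have "i \<le> 4" "j \<le> 4" "k \<le> 4" "l \<le> 4" by auto
  then show "cp i k l * cp i j k = cp i j l * cp j k l"
    using a by (auto dest!: le4 simp: cp_def)
qed (auto simp: cp_def)

lemma cq_in: "cq \<in> K2 {0::nat, 1} (*) 1 4"
  unfolding K2_def
proof (intro CollectI conjI allI impI)
  fix i j k assume "\<not> (i < j \<and> j < k \<and> k \<le> (4::nat))"
  then show "cq i j k = 1" by (auto simp: cq_def)
next
  fix i j k l assume a: "i < j \<and> j < k \<and> k < l \<and> l \<le> (4::nat)"
  then have "i \<le> 4" "j \<le> 4" "k \<le> 4" "l \<le> 4" by auto
  then show "cq i k l * cq i j k = cq i j l * cq j k l"
    using a by (auto dest!: le4 simp: cq_def)
qed (auto simp: cq_def)

lemma compat: "K2_face (1::nat) 4 0 cq = K2_face 1 4 2 cp"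
proof (intro ext)
  fix i j k :: nat
  show "K2_face 1 4 0 cq i j k = K2_face 1 4 2 cp i j k"
  proof (cases "i < j \<and> j < k \<and> k \<le> 3")
    case True
    then have "i \<le> 4" "j \<le> 4" "k \<le> 4" by auto
    then show ?thesis using True by (auto dest!: le4 simp: K2_face_def skip_def cp_def cq_def)
  qed (auto simp add: K2_face_def)
qed

lemma noext: "\<not> (\<exists>x \<in> K2 {0::nat, 1} (*) 1 5. K2_face 1 5 0 x = cp \<and> K2_face 1 5 3 x = cq)"
proof
  assume "\<exists>x \<in> K2 {0::nat, 1} (*) 1 5. K2_face 1 5 0 x = cp \<and> K2_face 1 5 3 x = cq"
  then obtain x where x: "x \<in> K2 {0::nat, 1} (*) 1 5" and e0: "K2_face 1 5 0 x = cp"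
    and e3: "K2_face 1 5 3 x = cq" by blast
  have mem: "\<And>i j k. i < j \<Longrightarrow> j < k \<Longrightarrow> k \<le> 5 \<Longrightarrow> x i j k = 0 \<or> x i j k = 1"
    using x unfolding K2_def by auto
  have coc: "\<And>i j k l. i < j \<Longrightarrow> j < k \<Longrightarrow> k < l \<Longrightarrow> l \<le> 5 \<Longrightarrow>
      x i k l * x i j k = x i j l * x j k l"
    using x unfolding K2_def by auto
  have g0: "\<And>i j k. K2_face 1 5 0 x i j k = cp i j k" using e0 by simp
  have g3: "\<And>i j k. K2_face 1 5 3 x i j k = cq i j k" using e3 by simp
  have a1: "x 0 1 4 = 1" using g3[of 0 1 3] by (simp add: K2_face_def skip_def cq_def)
  have a2: "x 1 3 4 = 0" using g0[of 0 2 3] by (simp add: K2_face_def skip_def cp_def)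
  have a3: "x 0 1 5 = 1" using g3[of 0 1 4] by (simp add: K2_face_def skip_def cq_def)
  have a4: "x 1 3 5 = 1" using g0[of 0 2 4] by (simp add: K2_face_def skip_def cp_def)
  have a5: "x 0 2 4 = 1" using g3[of 0 2 3] by (simp add: K2_face_def skip_def cq_def)
  have a6: "x 2 3 4 = 1" using g0[of 1 2 3] by (simp add: K2_face_def skip_def cp_def eval_nat_numeral)
  have c1: "x 0 3 4 * x 0 1 3 = x 0 1 4 * x 1 3 4" by (rule coc) auto
  have c2: "x 0 3 5 * x 0 1 3 = x 0 1 5 * x 1 3 5" by (rule coc) auto
  have c3: "x 0 3 4 * x 0 2 3 = x 0 2 4 * x 2 3 4" by (rule coc) auto
  show False using c1 c2 c3 a1 a2 a3 a4 a5 a6 by simp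
qed

theorem mainTheorem2:
  shows "\<not> SS_complex (K2 {0::nat, 1} (*) 1) (K2_face 1)
       \<and> \<not> BC (K2 {0::nat, 1} (*) 1) (K2_face 1) 0 3 5"
proof -
  have "\<not> BC (K2 {0::nat, 1} (*) 1) (K2_face 1) 0 3 5"
    unfolding BC_def using cp_in cq_in compat noext by auto
  then show ?thesis unfolding SS_complex_def by force
qed

end
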